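(* The following hold. (1) For any $t$ with $\mathcal{D}_t\ne\emptyset$, $s\mapsto E[e^{tY-sX}]$ is strictly convex on $\mathcal{D}_t$. Furthermore, for $t_1,t_2\in\mathbb{R}$ and $\lambda\in(0,1)$, $(1-\lambda)\mathcal{D}_{t_1}+\lambda\mathcal{D}_{t_2}\subset\mathcal{D}_{(1-\lambda)t_1+\lambda t_2}$. (2) For any $t\in\mathbb{R}$, $\mathcal{D}_t$ is a closed interval and $h(t)>-\infty$; if $h(t)<\infty$ then $h(t)\in\mathcal{D}_t$. (3) $h$ is convex on $\mathcal{A}=\{t\in\mathbb{R}:h(t)<\infty\}$ and $h(0)=0$. (4) $\mathcal{A}$ is an interval with $0\in\mathcal{A}$; moreover, if $\mathcal{D}_t^\circ\ne\emptyset$ for some $t\in\mathcal{A}$, then $\mathcal{D}_s^\circ\ne\emptyset$ for all $s\in\mathcal{A}^\circ$.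
   Context: $(X_n,Y_n)_{n\ge1}$ are i.i.d. copies of $(X,Y)\in\mathbb{R}^2$, where $X$ and $Y$ are nondegenerate and $\Pr\{\sup_{n\ge1}\sum_{i=1}^nX_i=\infty\}=1$. $\mathcal{D}_t=\{s\in\mathbb{R}:E[e^{tY-sX}]\le1\}$ and $h(t)=\inf\mathcal{D}_t$ with $\inf\emptyset=\infty$. $A^\circ$ denotes the interior of $A$; Minkowski combinations of sets are meant. *)

theory Defs
  imports "HOL-Probability.Probability"
begin

definition mgfXY :: "'a measure \<Rightarrow> ('a \<Rightarrow> real) \<Rightarrow> ('a \<Rightarrow> real) \<Rightarrow> real \<Rightarrow> real \<Rightarrow> ennreal" where
  "mgfXY M X Y t s = (\<integral>\<^sup>+ \<omega>. ennreal (exp (t * Y \<omega> - s * X \<omega>)) \<partial>M)"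

definition Dset :: "'a measure \<Rightarrow> ('a \<Rightarrow> real) \<Rightarrow> ('a \<Rightarrow> real) \<Rightarrow> real \<Rightarrow> real set" where
  "Dset M X Y t = {s. mgfXY M X Y t s \<le> 1}"

text \<open>h(t) = inf D_t, with inf of the empty set = +infinity (extended reals).\<close>
definition hfun :: "'a measure \<Rightarrow> ('a \<Rightarrow> real) \<Rightarrow> ('a \<Rightarrow> real) \<Rightarrow> real \<Rightarrow> ereal" where
  "hfun M X Y t = Inf (ereal ` Dset M X Y t)"

definition strictly_convex_on :: "real set \<Rightarrow> (real \<Rightarrow> real) \<Rightarrow> bool" where
  "strictly_convex_on S f \<longleftrightarrow>
     (\<forall>x\<in>S. \<forall>y\<in>S. \<forall>u. x \<noteq> y \<and> 0 < u \<and> u < 1 \<longrightarrow>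
        f ((1 - u) * x + u * y) < (1 - u) * f x + u * f y)"

end

theory Submission
  imports Defs
begin


lemma exp_strict_ineq: fixes d::real assumes "d \<noteq> 0" shows "1 + d < exp d"
proof (cases "1 + d/2 < 0")
  case True then show ?thesis using exp_gt_zero[of d] by linarith
next
  case False
  have "(1 + d/2)^2 \<le> exp (d/2) ^ 2"
    using False by (intro power_mono) (auto simp: exp_ge_add_one_self)
  also have "\<dots> = exp d" by (simp flip: exp_of_nat_mult)
  finally have "(1 + d/2)^2 \<le> exp d" .
  moreover have "(1 + d/2)^2 = 1 + d + d^2/4" by (simp add: power2_eq_square algebra_simps)
  moreover have "d^2 > 0" using assms by simp
  ultimately show ?thesis by linarith
qed

lemma exp_strict_conv:
  fixes a b u :: real assumes "a \<noteq> b" "0 < u" "u < 1"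
  shows "exp ((1-u)*a+u*b) < (1-u)*exp a + u*exp b"
proof -
  define z where "z = (1-u)*a+u*b"
  have "z - a = u*(b-a)" "z - b = (1-u)*(a-b)" unfolding z_def by (auto simp: algebra_simps)
  then have "a \<noteq> z" "b \<noteq> z" using assms by auto
  have ea: "exp z * (1 + (a - z)) < exp z * exp (a - z)"
    using exp_strict_ineq[of "a-z"] \<open>a\<noteq>z\<close> by simp
  have eb: "exp z * (1 + (b - z)) < exp z * exp (b - z)"
    using exp_strict_ineq[of "b-z"] \<open>b\<noteq>z\<close> by simp
  have eqs: "exp a = exp z * exp (a - z)" "exp b = exp z * exp (b-z)" by (simp_all flip: exp_add)
  have "(1-u)*(exp z * (1 + (a - z))) < (1-u)*exp a"
    using ea eqs assms by (intro mult_strict_left_mono) auto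
  moreover have "u*(exp z * (1 + (b - z))) < u*exp b"
    using eb eqs assms by (intro mult_strict_left_mono) auto
  ultimately have "(1-u)*exp a + u*exp b > (1-u)*(exp z * (1 + (a - z))) + u*(exp z * (1 + (b - z)))"
    by linarith
  also have "(1-u)*(exp z * (1 + (a - z))) + u*(exp z * (1 + (b - z))) = exp z"
    unfolding z_def by (simp add: algebra_simps)
  finally show ?thesis unfolding z_def .
qed

lemma exp_conv:
  fixes a b u :: real assumes "0 \<le> u" "u \<le> 1"
  shows "exp ((1-u)*a+u*b) \<le> (1-u)*exp a + u*exp b"
  using convex_onD[OF exp_convex, of u a b] assms by simp


context prob_space begin

lemma mgf_mix:
  assumes [measurable]: "X \<in> borel_measurable M" "Y \<in> borel_measurable M"
   and u: "0 \<le> u" "u \<le> 1"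
  shows "mgfXY M X Y ((1-u)*t1+u*t2) ((1-u)*a+u*b) \<le> ennreal (1-u) * mgfXY M X Y t1 a + ennreal u * mgfXY M X Y t2 b"
proof -
  have "mgfXY M X Y ((1-u)*t1+u*t2) ((1-u)*a+u*b) = (\<integral>\<^sup>+\<omega>. ennreal (exp ((1-u)*(t1*Y \<omega> - a*X \<omega>) + u*(t2*Y \<omega> - b*X \<omega>))) \<partial>M)"
    unfolding mgfXY_def by (intro nn_integral_cong) (simp add: algebra_simps)
  also have "\<dots> \<le> (\<integral>\<^sup>+\<omega>. ennreal (1-u) * ennreal (exp (t1*Y \<omega> - a*X \<omega>)) + ennreal u * ennreal (exp (t2*Y \<omega> - b*X \<omega>)) \<partial>M)"
  proof (intro nn_integral_mono)
    fix \<omega>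
    have "ennreal (1-u) * ennreal (exp (t1*Y \<omega> - a*X \<omega>)) + ennreal u * ennreal (exp (t2*Y \<omega> - b*X \<omega>))
       = ennreal ((1-u) * exp (t1*Y \<omega> - a*X \<omega>) + u * exp (t2*Y \<omega> - b*X \<omega>))"
      using u by (simp add: ennreal_mult ennreal_plus)
    then show "ennreal (exp ((1-u)*(t1*Y \<omega> - a*X \<omega>) + u*(t2*Y \<omega> - b*X \<omega>))) \<le> ennreal (1-u) * ennreal (exp (t1*Y \<omega> - a*X \<omega>)) + ennreal u * ennreal (exp (t2*Y \<omega> - b*X \<omega>))"
      using exp_conv[OF u] by (simp add: ennreal_leI)
  qed
  also have "\<dots> = ennreal (1-u) * mgfXY M X Y t1 a + ennreal u * mgfXY M X Y t2 b"
    unfolding mgfXY_def by (simp add: nn_integral_add nn_integral_cmult)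
  finally show ?thesis .
qed

lemma mgf_mix_le1:
  assumes [measurable]: "X \<in> borel_measurable M" "Y \<in> borel_measurable M"
   and u: "0 \<le> u" "u \<le> 1" and "mgfXY M X Y t1 a \<le> 1" "mgfXY M X Y t2 b \<le> 1"
  shows "mgfXY M X Y ((1-u)*t1+u*t2) ((1-u)*a+u*b) \<le> 1"
proof -
  have "mgfXY M X Y ((1-u)*t1+u*t2) ((1-u)*a+u*b) \<le> ennreal (1-u) * mgfXY M X Y t1 a + ennreal u * mgfXY M X Y t2 b"
    by (rule mgf_mix[OF assms(1-4)])
  also have "\<dots> \<le> ennreal (1-u) * 1 + ennreal u * 1"
    using assms by (intro add_mono mult_left_mono) auto
  also have "\<dots> = 1" using u by (simp flip: ennreal_plus)
  finally show ?thesis .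
qed


lemma mgf_strict:
  assumes [measurable]: "X \<in> borel_measurable M" "Y \<in> borel_measurable M"
   and nd: "emeasure M {\<omega>\<in>space M. X \<omega> \<noteq> 0} \<noteq> 0"
   and x: "mgfXY M X Y t x \<le> 1" and y: "mgfXY M X Y t y \<le> 1"
   and xy: "x \<noteq> y" and u: "0 < u" "u < 1"
  shows "enn2real (mgfXY M X Y t ((1-u)*x+u*y)) < (1-u)*enn2real (mgfXY M X Y t x) + u*enn2real (mgfXY M X Y t y)"
proof -
  define g where "g s \<omega> = exp (t*Y \<omega> - s*X \<omega>)" for s \<omega>
  have gm[measurable]: "g s \<in> borel_measurable M" for s unfolding g_def by measurable
  have int: "integrable M (g s)" if "mgfXY M X Y t s \<le> 1" for s
  proof (rule integrableI_bounded)
    have "(\<integral>\<^sup>+ \<omega>. ennreal (norm (g s \<omega>)) \<partial>M) = mgfXY M X Y t s"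
      unfolding mgfXY_def g_def by simp
    also have "\<dots> < \<infinity>" using that by (simp add: order_le_less_trans)
    finally show "(\<integral>\<^sup>+ \<omega>. ennreal (norm (g s \<omega>)) \<partial>M) < \<infinity>" .
  qed simp
  have eq: "enn2real (mgfXY M X Y t s) = integral\<^sup>L M (g s)" for s
    unfolding mgfXY_def g_def by (rule enn2real_nn_integral_eq_integral) auto
  define z where "z = (1-u)*x+u*y"
  have "mgfXY M X Y ((1-u)*t+u*t) ((1-u)*x+u*y) \<le> 1"
    using u x y by (intro mgf_mix_le1) auto
  moreover have "(1-u)*t+u*t = t" by (simp add: algebra_simps)
  ultimately have z: "mgfXY M X Y t z \<le> 1" unfolding z_def by simp
  have pt: "g z \<omega> \<le> (1-u)*g x \<omega> + u*g y \<omega>" for \<omega>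
  proof -
    have "g z \<omega> = exp ((1-u)*(t*Y \<omega> - x*X \<omega>) + u*(t*Y \<omega> - y*X \<omega>))"
      unfolding g_def z_def by (simp add: algebra_simps)
    then show ?thesis using exp_conv[of u] u unfolding g_def by simp
  qed
  have ptl: "g z \<omega> \<noteq> (1-u)*g x \<omega> + u*g y \<omega>" if "X \<omega> \<noteq> 0" for \<omega>
  proof -
    have "g z \<omega> = exp ((1-u)*(t*Y \<omega> - x*X \<omega>) + u*(t*Y \<omega> - y*X \<omega>))"
      unfolding g_def z_def by (simp add: algebra_simps)
    moreover have "t*Y \<omega> - x*X \<omega> \<noteq> t*Y \<omega> - y*X \<omega>" using that xy by simp
    ultimately show ?thesis using exp_strict_conv[of "t*Y \<omega> - x*X \<omega>" "t*Y \<omega> - y*X \<omega>" u] u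
      unfolding g_def by simp
  qed
  have "integral\<^sup>L M (g z) < integral\<^sup>L M (\<lambda>\<omega>. (1-u)*g x \<omega> + u*g y \<omega>)"
    using int[OF x] int[OF y] int[OF z] nd ptl pt
    by (intro integral_less_AE[where A="{\<omega>\<in>space M. X \<omega> \<noteq> 0}"]) auto
  also have "\<dots> = (1-u)*integral\<^sup>L M (g x) + u*integral\<^sup>L M (g y)"
    using int[OF x] int[OF y] by simp
  finally show ?thesis unfolding eq z_def .
qed

lemma D_closed:
  assumes [measurable]: "X \<in> borel_measurable M" "Y \<in> borel_measurable M"
  shows "closed {s. mgfXY M X Y t s \<le> 1}"
  unfolding closed_sequential_limits
proof safe
  fix xs :: "nat \<Rightarrow> real" and l assume xs: "\<forall>n. xs n \<in> {s. mgfXY M X Y t s \<le> 1}" and l: "xs \<longlonglongrightarrow> l"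
  have lim: "(\<lambda>n. ennreal (exp (t*Y \<omega> - xs n * X \<omega>))) \<longlonglongrightarrow> ennreal (exp (t*Y \<omega> - l*X \<omega>))" for \<omega>
    by (intro tendsto_ennrealI tendsto_intros l)
  have "mgfXY M X Y t l = (\<integral>\<^sup>+\<omega>. liminf (\<lambda>n. ennreal (exp (t*Y \<omega> - xs n * X \<omega>))) \<partial>M)"
    unfolding mgfXY_def by (intro nn_integral_cong) (metis lim lim_imp_Liminf trivial_limit_sequentially)
  also have "\<dots> \<le> liminf (\<lambda>n. mgfXY M X Y t (xs n))"
    unfolding mgfXY_def by (rule nn_integral_liminf) measurable
  also have "\<dots> \<le> limsup (\<lambda>n. mgfXY M X Y t (xs n))" by (rule Liminf_le_Limsup) simp
  also have "\<dots> \<le> 1" using xs by (intro Limsup_bounded) auto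
  finally show "mgfXY M X Y t l \<le> 1" .
qed

lemma X_pos:
  fixes Xs Ys :: "nat \<Rightarrow> 'a \<Rightarrow> real"
  assumes [measurable]: "X \<in> borel_measurable M" "Y \<in> borel_measurable M"
   and Xs: "\<And>i. i \<ge> 1 \<Longrightarrow> Xs i \<in> borel_measurable M" and Ys: "\<And>i. i\<ge>1 \<Longrightarrow> Ys i \<in> borel_measurable M"
   and dist: "\<And>i. i \<ge> 1 \<Longrightarrow> distr M borel (\<lambda>\<omega>. (Xs i \<omega>, Ys i \<omega>)) = distr M borel (\<lambda>\<omega>. (X \<omega>, Y \<omega>))"
   and sup: "AE \<omega> in M. (SUP n\<in>{1..}. ereal (\<Sum>i=1..n. Xs i \<omega>)) = \<infinity>"
  shows "emeasure M {\<omega>\<in>space M. 0 < X \<omega>} \<noteq> 0"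
proof
  assume 0: "emeasure M {\<omega>\<in>space M. 0 < X \<omega>} = 0"
  have X0: "AE \<omega> in M. X \<omega> \<le> 0"
    by (rule AE_I'[of "{\<omega>\<in>space M. 0 < X \<omega>}"]) (use 0 in \<open>auto intro: null_setsI\<close>)
  have Xi: "AE \<omega> in M. Xs i \<omega> \<le> 0" if i: "i \<ge> 1" for i
  proof -
    have [measurable]: "Xs i \<in> borel_measurable M" "Ys i \<in> borel_measurable M" using Xs Ys i by auto
    have pm: "(\<lambda>\<omega>. (X \<omega>, Y \<omega>)) \<in> borel_measurable M" by measurable
    have pmi: "(\<lambda>\<omega>. (Xs i \<omega>, Ys i \<omega>)) \<in> borel_measurable M" by measurable
    have "closed {x::real\<times>real. fst x \<le> 0}" by (intro closed_Collect_le continuous_intros)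
    then have fm: "{x \<in> space borel. fst x \<le> (0::real)} \<in> sets (borel :: (real \<times> real) measure)"
      by (simp add: borel_closed)
    have a: "AE p in distr M borel (\<lambda>\<omega>. (X \<omega>, Y \<omega>)). fst p \<le> (0::real)"
      by (subst AE_distr_iff[OF pm fm]) (auto simp: X0)
    have "AE p in distr M borel (\<lambda>\<omega>. (Xs i \<omega>, Ys i \<omega>)). fst p \<le> (0::real)" unfolding dist[OF i] by (rule a)
    then show ?thesis by (subst (asm) AE_distr_iff[OF pmi fm]) auto
  qed
  have "AE \<omega> in M. \<forall>i. i \<ge> 1 \<longrightarrow> Xs i \<omega> \<le> 0"
    unfolding AE_all_countable
  proof
    fix i :: nat show "AE \<omega> in M. i \<ge> 1 \<longrightarrow> Xs i \<omega> \<le> 0"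
      by (cases "i \<ge> 1") (use Xi in auto)
  qed
  then have "AE \<omega> in M. False" using sup
  proof eventually_elim
    fix \<omega> assume a: "\<forall>i. 1 \<le> i \<longrightarrow> Xs i \<omega> \<le> 0" and s: "(SUP n\<in>{1..}. ereal (\<Sum>i=1..n. Xs i \<omega>)) = \<infinity>"
    have "(SUP n\<in>{1..}. ereal (\<Sum>i=1..n. Xs i \<omega>)) \<le> 0"
      using a by (intro SUP_least) (auto intro!: sum_nonpos)
    with s show False by simp
  qed
  then show False by simp
qed

lemma D_bdd:
  assumes [measurable]: "X \<in> borel_measurable M" "Y \<in> borel_measurable M"
   and pos: "emeasure M {\<omega>\<in>space M. 0 < X \<omega>} \<noteq> 0"
  shows "\<exists>L. \<forall>s. mgfXY M X Y t s \<le> 1 \<longrightarrow> L \<le> s"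
proof -
  define N where "N n = {\<omega>\<in>space M. 1/(real n+1) < X \<omega> \<and> -real n < t*Y \<omega>}" for n::nat
  have Nm[measurable]: "N n \<in> sets M" for n unfolding N_def by measurable
  have sub: "{\<omega>\<in>space M. 0 < X \<omega>} \<subseteq> (\<Union>n. N n)"
  proof
    fix \<omega> assume "\<omega> \<in> {\<omega>\<in>space M. 0 < X \<omega>}"
    then have w: "\<omega> \<in> space M" "0 < X \<omega>" by auto
    obtain n1 where n1: "inverse (real (Suc n1)) < X \<omega>" using reals_Archimedean[OF w(2)] by blast
    obtain n2 where n2: "- (t*Y \<omega>) < real n2" using reals_Archimedean2 by blast
    define n where "n = max n1 n2"
    have "1/(real n+1) \<le> 1/(real n1 + 1)" unfolding n_def by (intro divide_left_mono) auto
    moreover have "real n2 \<le> real n" unfolding n_def by simp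
    ultimately have "\<omega> \<in> N n" using n1 n2 w unfolding N_def by (auto simp: inverse_eq_divide add.commute)
    then show "\<omega> \<in> (\<Union>n. N n)" by blast
  qed
  obtain n where pn: "emeasure M (N n) \<noteq> 0"
  proof (rule ccontr)
    assume "\<not> thesis"
    then have "\<forall>n. N n \<in> null_sets M" using that by (meson Nm null_setsI)
    then have "(\<Union>n. N n) \<in> null_sets M" by (intro null_sets_UN) auto
    moreover have "{\<omega>\<in>space M. 0 < X \<omega>} \<in> sets M" by measurable
    ultimately have "{\<omega>\<in>space M. 0 < X \<omega>} \<in> null_sets M" using sub by (meson null_sets_subset)
    then show False using pos by auto
  qed
  define p where "p = measure M (N n)"
  have p: "0 < p" using pn unfolding p_def by (simp add: emeasure_eq_measure zero_less_measure_iff)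
  define L where "L = min 0 ((real n+1) * (ln p - real n))"
  show ?thesis
  proof (intro exI allI impI)
    fix s assume s: "mgfXY M X Y t s \<le> 1"
    show "L \<le> s"
    proof (cases "s \<le> 0")
      case False then show ?thesis unfolding L_def by simp
    next
      case True
      have "ennreal (exp (-real n - s/(real n+1)) * p) = (\<integral>\<^sup>+\<omega>. ennreal (exp (-real n - s/(real n+1))) * indicator (N n) \<omega> \<partial>M)"
        by (simp add: nn_integral_cmult_indicator emeasure_eq_measure p_def ennreal_mult)
      also have "\<dots> \<le> mgfXY M X Y t s" unfolding mgfXY_def
      proof (intro nn_integral_mono)
        fix \<omega>
        show "ennreal (exp (-real n - s/(real n+1))) * indicator (N n) \<omega> \<le> ennreal (exp (t*Y \<omega> - s*X \<omega>))"
        proof (cases "\<omega> \<in> N n")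
          case True
          then have a: "1/(real n+1) < X \<omega>" "-real n < t*Y \<omega>" unfolding N_def by auto
          have "(-s) * (1/(real n+1)) \<le> (-s) * X \<omega>" using a \<open>s \<le> 0\<close> by (intro mult_left_mono) auto
          then have "-real n - s/(real n+1) \<le> t*Y \<omega> - s*X \<omega>" using a by simp
          then show ?thesis using True by (simp add: ennreal_leI)
        qed simp
      qed
      also have "\<dots> \<le> 1" by (rule s)
      finally have "exp (-real n - s/(real n+1)) * p \<le> 1" by simp
      then have "ln (exp (-real n - s/(real n+1)) * p) \<le> 0" using p by simp
      then have "-real n - s/(real n+1) + ln p \<le> 0" using p by (simp add: ln_mult)
      then have "(real n+1) * (ln p - real n) \<le> s"
        by (simp add: field_simps)
      then show ?thesis unfolding L_def by simp
    qed
  qed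
qed

lemma rw_contra:
  fixes Xs Ys :: "nat \<Rightarrow> 'a \<Rightarrow> real"
  assumes [measurable]: "X \<in> borel_measurable M" "Y \<in> borel_measurable M"
   and Xs: "\<And>i. i \<ge> 1 \<Longrightarrow> Xs i \<in> borel_measurable M" and Ys: "\<And>i. i\<ge>1 \<Longrightarrow> Ys i \<in> borel_measurable M"
   and indep: "indep_vars (\<lambda>_. borel) (\<lambda>i \<omega>. (Xs i \<omega>, Ys i \<omega>)) {1..}"
   and dist: "\<And>i. i \<ge> 1 \<Longrightarrow> distr M borel (\<lambda>\<omega>. (Xs i \<omega>, Ys i \<omega>)) = distr M borel (\<lambda>\<omega>. (X \<omega>, Y \<omega>))"
   and sup: "AE \<omega> in M. (SUP n\<in>{1..}. ereal (\<Sum>i=1..n. Xs i \<omega>)) = \<infinity>"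
   and c: "0 < c" and rho: "(\<integral>\<^sup>+\<omega>. ennreal (exp (c * X \<omega>)) \<partial>M) = ennreal \<rho>" "\<rho> < 1" "0 \<le> \<rho>"
  shows False
proof -
  define S where "S n \<omega> = (\<Sum>i=1..n. Xs i \<omega>)" for n \<omega>
  have Sm[measurable]: "S n \<in> borel_measurable M" for n
    unfolding S_def by (intro borel_measurable_sum) (use Xs in auto)
  have Ei: "(\<integral>\<^sup>+\<omega>. ennreal (exp (c * Xs i \<omega>)) \<partial>M) = ennreal \<rho>" if i: "i \<ge> 1" for i
  proof -
    have [measurable]: "Xs i \<in> borel_measurable M" "Ys i \<in> borel_measurable M" using Xs Ys i by auto
    have pm: "(\<lambda>\<omega>. (X \<omega>, Y \<omega>)) \<in> borel_measurable M" by measurable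
    have pmi: "(\<lambda>\<omega>. (Xs i \<omega>, Ys i \<omega>)) \<in> borel_measurable M" by measurable
    have fm: "(\<lambda>p::real\<times>real. ennreal (exp (c * fst p))) \<in> borel_measurable borel"
      by (intro borel_measurable_continuous_onI continuous_on_ennreal continuous_intros)
    have "(\<integral>\<^sup>+\<omega>. ennreal (exp (c * Xs i \<omega>)) \<partial>M) = (\<integral>\<^sup>+p. ennreal (exp (c * fst p)) \<partial>distr M borel (\<lambda>\<omega>. (Xs i \<omega>, Ys i \<omega>)))"
      by (subst nn_integral_distr[OF pmi]) (auto simp: fm)
    also have "\<dots> = (\<integral>\<^sup>+p. ennreal (exp (c * fst p)) \<partial>distr M borel (\<lambda>\<omega>. (X \<omega>, Y \<omega>)))"
      unfolding dist[OF i] ..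
    also have "\<dots> = (\<integral>\<^sup>+\<omega>. ennreal (exp (c * X \<omega>)) \<partial>M)"
      by (subst nn_integral_distr[OF pm]) (auto simp: fm)
    finally show ?thesis using rho by simp
  qed
  have ES: "(\<integral>\<^sup>+\<omega>. ennreal (exp (c * S n \<omega>)) \<partial>M) = ennreal (\<rho>^n)" for n
  proof -
    have "(\<integral>\<^sup>+\<omega>. ennreal (exp (c * S n \<omega>)) \<partial>M) = (\<integral>\<^sup>+\<omega>. (\<Prod>i\<in>{1..n}. ennreal (exp (c * Xs i \<omega>))) \<partial>M)"
      unfolding S_def by (intro nn_integral_cong) (simp add: sum_distrib_left exp_sum prod_ennreal)
    also have "\<dots> = (\<Prod>i\<in>{1..n}. \<integral>\<^sup>+\<omega>. ennreal (exp (c * Xs i \<omega>)) \<partial>M)"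
    proof (rule indep_vars_nn_integral)
      show "finite {1..n}" by simp
      have "indep_vars (\<lambda>_. borel) (\<lambda>i \<omega>. (Xs i \<omega>, Ys i \<omega>)) {1..n}"
        by (rule indep_vars_subset[OF indep]) auto
      then have "indep_vars (\<lambda>_. borel) (\<lambda>i \<omega>. (\<lambda>p::real\<times>real. ennreal (exp (c * fst p))) ((Xs i \<omega>, Ys i \<omega>))) {1..n}"
        by (rule indep_vars_compose2) (intro borel_measurable_continuous_onI continuous_on_ennreal continuous_intros)
      then show "indep_vars (\<lambda>_. borel) (\<lambda>i \<omega>. ennreal (exp (c * Xs i \<omega>))) {1..n}" by simp
    qed auto
    also have "\<dots> = (\<Prod>i\<in>{1..n}. ennreal \<rho>)" by (intro prod.cong) (auto simp: Ei)
    also have "\<dots> = ennreal (\<rho>^n)" using rho by (simp add: ennreal_power)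
    finally show ?thesis .
  qed
  have mk: "emeasure M {\<omega>\<in>space M. a \<le> S n \<omega>} \<le> ennreal (exp (-c*a) * \<rho>^n)" for a n
  proof -
    have "emeasure M {\<omega>\<in>space M. a \<le> S n \<omega>} = (\<integral>\<^sup>+\<omega>. indicator {\<omega>\<in>space M. a \<le> S n \<omega>} \<omega> \<partial>M)"
      by simp
    also have "\<dots> \<le> (\<integral>\<^sup>+\<omega>. ennreal (exp (-c*a)) * ennreal (exp (c * S n \<omega>)) \<partial>M)"
    proof (intro nn_integral_mono)
      fix \<omega>
      show "indicator {\<omega> \<in> space M. a \<le> S n \<omega>} \<omega> \<le> ennreal (exp (-c*a)) * ennreal (exp (c * S n \<omega>))"
      proof (cases "\<omega> \<in> {\<omega> \<in> space M. a \<le> S n \<omega>}")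
        case True
        then have "0 \<le> c * (S n \<omega> - a)" using c by auto
        then have "1 \<le> exp (-c*a) * exp (c * S n \<omega>)"
          by (simp add: algebra_simps flip: exp_add)
        then show ?thesis using True by (simp add: ennreal_mult[symmetric] ennreal_leI del: ennreal_1 flip: ennreal_1)
      qed simp
    qed
    also have "\<dots> = ennreal (exp (-c*a)) * ennreal (\<rho>^n)" by (simp add: nn_integral_cmult ES)
    also have "\<dots> = ennreal (exp (-c*a) * \<rho>^n)" using rho by (simp add: ennreal_mult)
    finally show ?thesis .
  qed
  define a where "a = \<rho> / ((1-\<rho>)*c)"
  define U where "U = (\<Union>n. {\<omega>\<in>space M. a \<le> S (Suc n) \<omega>})"
  have Um: "U \<in> sets M" unfolding U_def by measurable
  have "AE \<omega> in M. \<omega> \<in> U" using sup AE_space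
  proof eventually_elim
    fix \<omega> assume s: "(SUP n\<in>{1..}. ereal (\<Sum>i=1..n. Xs i \<omega>)) = \<infinity>" and w: "\<omega> \<in> space M"
    then have "ereal a < (SUP n\<in>{1..}. ereal (S n \<omega>))" unfolding S_def by simp
    then obtain n where n: "n \<in> {1..}" "ereal a < ereal (S n \<omega>)" by (auto simp: less_SUP_iff)
    then have "Suc (n - 1) = n" by simp
    then have "a \<le> S (Suc (n-1)) \<omega>" using n by simp
    then show "\<omega> \<in> U" unfolding U_def using w by blast
  qed
  then have "prob U = 1" using Um by (simp add: AE_in_set_eq_1)
  then have "1 = emeasure M U" by (simp add: emeasure_eq_measure)
  also have "emeasure M U \<le> (\<Sum>n. emeasure M {\<omega>\<in>space M. a \<le> S (Suc n) \<omega>})"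
    unfolding U_def by (rule emeasure_subadditive_countably) auto
  also have "\<dots> \<le> (\<Sum>n. ennreal (exp (-c*a) * \<rho>^Suc n))"
    by (intro suminf_le mk summableI)
  also have sm: "summable (\<lambda>n. exp (-c*a) * \<rho>^Suc n)"
    using rho by (intro summable_mult summable_Suc_iff[THEN iffD2] summable_geometric) auto
  have "(\<Sum>n. ennreal (exp (-c*a) * \<rho>^Suc n)) = ennreal (\<Sum>n. exp (-c*a) * \<rho>^Suc n)"
    using rho sm by (intro suminf_ennreal2) auto
  also have "(\<Sum>n. exp (-c*a) * \<rho>^Suc n) = exp (-c*a) * \<rho> * (\<Sum>n. \<rho>^n)"
    using rho by (simp add: suminf_mult summable_geometric mult.assoc)
  also have "\<dots> = exp (-c*a) * \<rho> / (1-\<rho>)"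
    using rho by (simp add: suminf_geometric)
  finally have le: "1 \<le> exp (-c*a) * \<rho> / (1-\<rho>)" by simp
  have "1 + c*a \<le> exp (c*a)" by (rule exp_ge_add_one_self)
  moreover have "1 + c*a = 1/(1-\<rho>)" unfolding a_def using c rho by (simp add: field_simps)
  ultimately have "1/(1-\<rho>) \<le> exp (c*a)" by simp
  then have "exp (-c*a) \<le> 1-\<rho>" using rho by (simp add: exp_minus field_simps)
  then have "exp (-c*a) * \<rho> / (1-\<rho>) \<le> (1-\<rho>) * \<rho> / (1-\<rho>)"
    using rho by (intro divide_right_mono mult_right_mono) auto
  also have "\<dots> = \<rho>" using rho by simp
  finally have "exp (-c*a) * \<rho> / (1-\<rho>) \<le> \<rho>" .
  then show False using le rho by linarith
qed

end

lemma interior_mix: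
  fixes D :: "real \<Rightarrow> real set"
  assumes mixp: "\<And>a b t1 t2 u. a \<in> D t1 \<Longrightarrow> b \<in> D t2 \<Longrightarrow> 0 \<le> u \<Longrightarrow> u \<le> 1 \<Longrightarrow> (1-u)*a+u*b \<in> D ((1-u)*t1+u*t2)"
   and i0: "interior (D t0) \<noteq> {}" and ne: "D t' \<noteq> {}" and u: "0 \<le> u" "u < 1"
  shows "interior (D ((1-u)*t0+u*t')) \<noteq> {}"
proof -
  obtain x where "x \<in> interior (D t0)" using i0 by blast
  then obtain e where e: "e > 0" "ball x e \<subseteq> D t0" by (auto simp: mem_interior)
  obtain c where c: "c \<in> D t'" using ne by blast
  define p where "p = (1-u)*x+u*c"
  have "ball p ((1-u)*e) \<subseteq> D ((1-u)*t0+u*t')"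
  proof
    fix w assume w: "w \<in> ball p ((1-u)*e)"
    define y where "y = (w - u*c)/(1-u)"
    have wy: "w = (1-u)*y+u*c" using u by (simp add: y_def field_simps)
    have yxe: "y - x = (w - p)/(1-u)" using u by (simp add: y_def p_def field_simps)
    have lt: "\<bar>w - p\<bar> < (1-u)*e" using w by (simp add: dist_real_def abs_minus_commute)
    have "\<bar>y - x\<bar> = \<bar>w - p\<bar>/(1-u)" using u unfolding yxe by (simp add: abs_divide)
    also have "\<dots> < e" using lt u by (simp add: pos_divide_less_eq mult.commute)
    finally have "\<bar>y - x\<bar> < e" .
    then have "y \<in> D t0" using e by (auto simp: dist_real_def abs_minus_commute)
    then show "w \<in> D ((1-u)*t0+u*t')" unfolding wy using mixp[OF _ c, of y t0 u] u by simp
  qed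
  moreover have "(1-u)*e > 0" using u e by simp
  ultimately have "p \<in> interior (D ((1-u)*t0+u*t'))" by (auto simp: mem_interior)
  then show ?thesis by blast
qed




theorem lemma6p1:
  fixes M :: "'a measure" and X Y :: "'a \<Rightarrow> real" and Xs Ys :: "nat \<Rightarrow> 'a \<Rightarrow> real"
  assumes "prob_space M"
    and "X \<in> borel_measurable M" and "Y \<in> borel_measurable M"
    and "\<And>i. i \<ge> 1 \<Longrightarrow> Xs i \<in> borel_measurable M"
    and "\<And>i. i \<ge> 1 \<Longrightarrow> Ys i \<in> borel_measurable M"
    and "prob_space.indep_vars M (\<lambda>_. borel) (\<lambda>i \<omega>. (Xs i \<omega>, Ys i \<omega>)) {1..}"
    and "\<And>i. i \<ge> 1 \<Longrightarrow> distr M borel (\<lambda>\<omega>. (Xs i \<omega>, Ys i \<omega>)) = distr M borel (\<lambda>\<omega>. (X \<omega>, Y \<omega>))"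
    and "\<not> (\<exists>c. AE \<omega> in M. X \<omega> = c)" and "\<not> (\<exists>c. AE \<omega> in M. Y \<omega> = c)"
    and "AE \<omega> in M. (SUP n\<in>{1..}. ereal (\<Sum>i=1..n. Xs i \<omega>)) = \<infinity>"
  defines "D \<equiv> Dset M X Y" and "h \<equiv> hfun M X Y"
  defines "A \<equiv> {t. h t < \<infinity>}"
  shows
    "((\<forall>t. D t \<noteq> {} \<longrightarrow> strictly_convex_on (D t) (\<lambda>s. enn2real (mgfXY M X Y t s))) \<and>
     (\<forall>t1 t2 u. 0 < u \<and> u < 1 \<longrightarrow>
        {(1 - u) * a + u * b | a b. a \<in> D t1 \<and> b \<in> D t2} \<subseteq> D ((1 - u) * t1 + u * t2))) \<and>
    (\<forall>t. is_interval (D t) \<and> closed (D t) \<and> h t > - \<infinity> \<and>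
         (h t < \<infinity> \<longrightarrow> (\<exists>s\<in>D t. h t = ereal s))) \<and>
    (convex_on A (\<lambda>t. real_of_ereal (h t)) \<and> h 0 = 0) \<and>
    (is_interval A \<and> 0 \<in> A \<and>
     ((\<exists>t\<in>A. interior (D t) \<noteq> {}) \<longrightarrow> (\<forall>s\<in>interior A. interior (D s) \<noteq> {})))"
proof -
  interpret P: prob_space M by fact
  note meas[measurable] = assms(2,3)
  have nd: "emeasure M {\<omega>\<in>space M. X \<omega> \<noteq> 0} \<noteq> 0"
  proof
    assume e0: "emeasure M {\<omega>\<in>space M. X \<omega> \<noteq> 0} = 0"
    have "AE \<omega> in M. X \<omega> = 0"
      by (rule AE_I'[of "{\<omega>\<in>space M. X \<omega> \<noteq> 0}"]) (use e0 in \<open>auto intro: null_setsI\<close>)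
    then show False using assms(8) by blast
  qed
  have pos: "emeasure M {\<omega>\<in>space M. 0 < X \<omega>} \<noteq> 0"
    by (rule P.X_pos[OF assms(2-5) assms(7) assms(10)])
  have Dd: "D t = {s. mgfXY M X Y t s \<le> 1}" for t unfolding D_def Dset_def ..
  have mix: "(1-u)* a+u* b \<in> D ((1-u)* t1+u* t2)" if "a \<in> D t1" "b \<in> D t2" "0 \<le> u" "u \<le> 1" for a b t1 t2 u
    using that P.mgf_mix_le1[OF meas, of u t1 a t2 b] unfolding Dd by auto
  have convD: "convex (D t)" for t
  proof (rule convexI)
    fix x y u v :: real assume "x \<in> D t" "y \<in> D t" "0 \<le> u" "0 \<le> v" "u + v = 1"
    then have "(1 - v) * x + v * y \<in> D ((1 - v) * t + v * t)" by (intro mix) auto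
    moreover have "(1 - v) * t + v * t = t" "1 - v = u" using \<open>u+v=1\<close> by (auto simp: algebra_simps)
    ultimately show "u *\<^sub>R x + v *\<^sub>R y \<in> D t" by simp
  qed
  have closedD: "closed (D t)" for t unfolding Dd by (rule P.D_closed[OF meas])
  have bdd: "bdd_below (D t)" for t
  proof -
    obtain L where "\<forall>s. mgfXY M X Y t s \<le> 1 \<longrightarrow> L \<le> s" using P.D_bdd[OF meas pos] by blast
    then show ?thesis unfolding Dd by (auto intro: bdd_belowI)
  qed
  have hfin: "h t = ereal (Inf (D t))" if "D t \<noteq> {}" for t
    unfolding h_def hfun_def D_def[symmetric] using ereal_Inf'[OF bdd that] by simp
  have hmem: "Inf (D t) \<in> D t" if "D t \<noteq> {}" for t
    using closed_contains_Inf[OF that bdd closedD] .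
  have hinf: "h t = \<infinity>" if "D t = {}" for t
    unfolding h_def hfun_def D_def[symmetric] using that by (simp add: top_ereal_def)
  have Aeq: "t \<in> A \<longleftrightarrow> D t \<noteq> {}" for t
    unfolding A_def using hfin hinf by force
  have m00: "mgfXY M X Y 0 0 = 1"
    unfolding mgfXY_def by (simp add: P.emeasure_space_1)
  have D0: "0 \<in> D 0" unfolding Dd using m00 by simp
  have D0neg: "\<not> s < 0" if s: "s \<in> D 0" for s
  proof
    assume sn: "s < 0"
    have ms: "mgfXY M X Y 0 s \<le> 1" using s unfolding Dd by simp
    have "(1-1/2)* s+1/2*0 \<in> D ((1-1/2)*0+1/2*0)" by (rule mix[OF s D0]) auto
    then have mh: "mgfXY M X Y 0 (s/2) \<le> 1" unfolding Dd by simp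
    have "enn2real (mgfXY M X Y 0 ((1-1/2)* s+1/2*0)) < (1-1/2)* enn2real (mgfXY M X Y 0 s) + 1/2* enn2real (mgfXY M X Y 0 0)"
      by (rule P.mgf_strict[OF meas nd ms]) (use m00 sn in auto)
    moreover have "enn2real (mgfXY M X Y 0 s) \<le> 1" using ms
      using enn2real_mono[OF ms] by simp
    ultimately have rl: "enn2real (mgfXY M X Y 0 (s/2)) < 1" using m00 by simp
    define \<rho> where "\<rho> = enn2real (mgfXY M X Y 0 (s/2))"
    have nt: "mgfXY M X Y 0 (s/2) < top" using mh by (rule order.strict_trans1) simp
    have "mgfXY M X Y 0 (s/2) = ennreal \<rho>" unfolding \<rho>_def using ennreal_enn2real[OF nt] by simp
    moreover have "mgfXY M X Y 0 (s/2) = (\<integral>\<^sup>+\<omega>. ennreal (exp ((-s/2) * X \<omega>)) \<partial>M)"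
      unfolding mgfXY_def by simp
    ultimately have e: "(\<integral>\<^sup>+\<omega>. ennreal (exp ((-s/2) * X \<omega>)) \<partial>M) = ennreal \<rho>" by simp
    have c: "0 < -s/2" using sn by simp
    have r1: "\<rho> < 1" using rl unfolding \<rho>_def .
    have r0: "0 \<le> \<rho>" unfolding \<rho>_def by (rule enn2real_nonneg)
    show False
      by (rule P.rw_contra[OF assms(2-7) assms(10) c e r1 r0])
  qed
  have h0: "h 0 = 0"
  proof -
    have "Inf (D 0) = 0" using D0 D0neg by (intro cInf_eq_minimum) force+
    then show ?thesis using hfin[of 0] D0 by (auto simp: zero_ereal_def)
  qed
  have convA: "convex A"
  proof (rule convexI)
    fix x y u v :: real assume xy: "x \<in> A" "y \<in> A" "0 \<le> u" "0 \<le> v" "u + v = 1"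
    then obtain a b where ab: "a \<in> D x" "b \<in> D y" using Aeq by blast
    then have "(1 - v) * a + v * b \<in> D ((1 - v) * x + v * y)" using xy by (intro mix) auto
    moreover have "1 - v = u" using xy by simp
    ultimately show "u *\<^sub>R x + v *\<^sub>R y \<in> A" using Aeq by auto
  qed
  have part1: "(\<forall>t. D t \<noteq> {} \<longrightarrow> strictly_convex_on (D t) (\<lambda>s. enn2real (mgfXY M X Y t s))) \<and>
     (\<forall>t1 t2 u. 0 < u \<and> u < 1 \<longrightarrow>
        {(1 - u) * a + u * b | a b. a \<in> D t1 \<and> b \<in> D t2} \<subseteq> D ((1 - u) * t1 + u * t2))"
  proof (intro conjI allI impI)
    fix t assume "D t \<noteq> {}"
    show "strictly_convex_on (D t) (\<lambda>s. enn2real (mgfXY M X Y t s))"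
      unfolding strictly_convex_on_def
    proof (intro ballI allI impI)
      fix x y u :: real assume x: "x \<in> D t" and y: "y \<in> D t" and c: "x \<noteq> y \<and> 0 < u \<and> u < 1"
      show "enn2real (mgfXY M X Y t ((1 - u) * x + u * y)) < (1 - u) * enn2real (mgfXY M X Y t x) + u * enn2real (mgfXY M X Y t y)"
        using x y c by (intro P.mgf_strict[OF meas nd]) (auto simp: Dd)
    qed
  next
    fix t1 t2 u :: real assume "0 < u \<and> u < 1"
    show "{(1 - u) * a + u * b | a b. a \<in> D t1 \<and> b \<in> D t2} \<subseteq> D ((1 - u) * t1 + u * t2)"
    proof (rule subsetI)
      fix z assume "z \<in> {(1 - u) * a + u * b | a b. a \<in> D t1 \<and> b \<in> D t2}"
      then obtain a b where z: "z = (1 - u) * a + u * b" "a \<in> D t1" "b \<in> D t2" by blast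
      show "z \<in> D ((1 - u) * t1 + u * t2)" unfolding z(1) using z(2,3) \<open>0 < u \<and> u < 1\<close> by (intro mix) auto
    qed
  qed
  have part2: "\<forall>t. is_interval (D t) \<and> closed (D t) \<and> h t > - \<infinity> \<and>
         (h t < \<infinity> \<longrightarrow> (\<exists>s\<in>D t. h t = ereal s))"
  proof (intro allI conjI impI)
    fix t
    show "is_interval (D t)" using convD by (simp add: is_interval_convex_1)
    show "closed (D t)" by (rule closedD)
    show "h t > - \<infinity>" using hfin hinf by (cases "D t = {}") auto
    assume "h t < \<infinity>"
    then have "D t \<noteq> {}" using hinf by auto
    then show "\<exists>s\<in>D t. h t = ereal s" using hfin hmem by blast
  qed
  have part3: "convex_on A (\<lambda>t. real_of_ereal (h t))"
    unfolding convex_on_def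
  proof (intro conjI ballI allI impI convA)
    fix x y u v :: real assume xy: "x \<in> A" "y \<in> A" "0 \<le> u" "0 \<le> v" "u + v = 1"
    have nx: "D x \<noteq> {}" "D y \<noteq> {}" using xy Aeq by auto
    have "(1 - v) * Inf (D x) + v * Inf (D y) \<in> D ((1 - v) * x + v * y)" using xy hmem nx by (intro mix) auto
    moreover have "1 - v = u" using xy by simp
    ultimately have m: "u * Inf (D x) + v * Inf (D y) \<in> D (u * x + v * y)" by simp
    then have "Inf (D (u * x + v * y)) \<le> u * Inf (D x) + v * Inf (D y)" by (intro cInf_lower bdd)
    moreover have "D (u * x + v * y) \<noteq> {}" using m by blast
    ultimately show "real_of_ereal (h (u *\<^sub>R x + v *\<^sub>R y)) \<le> u * real_of_ereal (h x) + v * real_of_ereal (h y)"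
      using hfin nx by simp
  qed
  have part4: "(\<exists>t\<in>A. interior (D t) \<noteq> {}) \<longrightarrow> (\<forall>s\<in>interior A. interior (D s) \<noteq> {})"
  proof (intro impI ballI)
    fix s assume "\<exists>t\<in>A. interior (D t) \<noteq> {}" and s: "s \<in> interior A"
    then obtain t0 where t0: "t0 \<in> A" "interior (D t0) \<noteq> {}" by blast
    obtain d where d: "d > 0" "ball s d \<subseteq> A" using s by (auto simp: mem_interior)
    show "interior (D s) \<noteq> {}"
    proof (cases "s = t0")
      case True then show ?thesis using t0 by simp
    next
      case False
      define t' where "t' = (if t0 < s then s + d/2 else s - d/2)"
      define u where "u = (s - t0)/(t' - t0)"
      have "t' \<in> ball s d" using d unfolding t'_def by (auto simp: dist_real_def)
      then have t'A: "D t' \<noteq> {}" using d Aeq by auto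
      have "t' - t0 \<noteq> 0" using False d unfolding t'_def by auto
      have u01: "0 \<le> u \<and> u < 1"
      proof (cases "t0 < s")
        case True then show ?thesis using d unfolding u_def t'_def by (auto simp: field_simps)
      next
        case f: False
        then have "s < t0" using False by simp
        then show ?thesis using d f unfolding u_def t'_def by (auto simp: field_simps)
      qed
      have ut: "u * (t' - t0) = s - t0" using \<open>t' - t0 \<noteq> 0\<close> unfolding u_def by simp
      have "(1-u) * t0 + u * t' = t0 + u * (t' - t0)" by (simp add: algebra_simps)
      then have "(1-u) * t0 + u * t' = s" using ut by simp
      moreover have "interior (D ((1-u)* t0+u* t')) \<noteq> {}" using u01 by (intro interior_mix[of D, OF mix t0(2) t'A]) auto
      ultimately show ?thesis by simp
    qed
  qed
  show ?thesis
  proof -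
    have iA: "is_interval A" using convA by (simp add: is_interval_convex_1)
    have A0: "0 \<in> A" using Aeq D0 by blast
    show ?thesis by (rule conjI[OF part1 conjI[OF part2 conjI[OF conjI[OF part3 h0] conjI[OF iA conjI[OF A0 part4]]]]])
  qed
qed


end
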